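(* Let $1\ge l_1\ge l_2\ge\dots\ge l_p>0$ and let $\Omega=J_l$ be the sorted $\ell_1$ (SLOPE) norm. Fix $J\subset\{1,\dots,p\}$ and let $g$ be the gauge norm described in the context, built from all subsets $S\subset\{1,\dots,p\}$ as allowed sets. Then $g(\beta)=l_p\|\beta\|_1$ for all $\beta\in\mathbb{R}^p$.
   Context: $J_l(\beta):=l_1|\beta|_{(1)}+\dots+l_p|\beta|_{(p)}$, where $|\beta|_{(1)}\ge\dots\ge|\beta|_{(p)}$ are the ordered absolute values of the entries of $\beta$. For $S\subset\{1,\dots,p\}$, $\beta_S$ is the vector with entries $\beta_j1\{j\in S\}$, and $|\beta|_{(1,S)}\ge\dots\ge|\beta|_{(|S|,S)}$ denote the ordered values of $\{|\beta_j|:j\in S\}$. Every $S$ is allowed, with $\Omega^{S^{c}}(\beta_{S^{c}}):=\sum_{i=1}^{|S^{c}|}l_{|S|+i}|\beta|_{(i,S^{c})}$, and $\Upsilon_S(\beta):=J_l(\beta_S)+\Omega^{S^{c}}(\beta_{S^{c}})=\sum_{j=1}^{|S|}l_j|\beta|_{(j,S)}+\sum_{i=1}^{|S^{c}|}l_{|S|+i}|\beta|_{(i,S^{c})}$. Let $\beta_{f(J)}:=\beta_J-\beta_{J^{c}}$, $\mathrm{flip}_J(B):=\{\beta_{f(J)}:\beta\in B\}$, $\overline{B}:=\bigcup_{S}\{\beta:\Upsilon_S(\beta)\le1\}$, $B_g:=\mathrm{Conv}(\overline{B}\cup\mathrm{flip}_J(\overline{B}))$, and $g(x):=\inf\{t>0:x\in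 tB_g\}$. *)

theory Defs
  imports "HOL-Analysis.Analysis" "HOL-Library.Multiset"
begin

text \<open>Vectors in R^p are modelled as real ^ 'n with p = CARD('n).
  Weights l are indexed l 1, ..., l p (l :: nat => real).\<close>

text \<open>Ordered absolute values of the entries of beta indexed by S, in nonincreasing
  order; element number k-1 (0-based) of this list is |beta|_(k,S).\<close>
definition ord_abs :: "real ^ 'n \<Rightarrow> 'n set \<Rightarrow> real list" where
  "ord_abs \<beta> S = rev (sorted_list_of_multiset (image_mset (\<lambda>j. \<bar>\<beta> $ j\<bar>) (mset_set S)))"

definition J_l :: "(nat \<Rightarrow> real) \<Rightarrow> real ^ 'n \<Rightarrow> real" where
  "J_l l \<beta> = (\<Sum>i<CARD('n). l (Suc i) * (ord_abs \<beta> UNIV ! i))"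

definition restr :: "real ^ 'n \<Rightarrow> 'n set \<Rightarrow> real ^ 'n" where
  "restr \<beta> S = (\<chi> j. if j \<in> S then \<beta> $ j else 0)"

definition Omega_c :: "(nat \<Rightarrow> real) \<Rightarrow> 'n set \<Rightarrow> real ^ 'n \<Rightarrow> real" where
  "Omega_c l S \<beta> = (\<Sum>i<card (- S). l (card S + Suc i) * (ord_abs \<beta> (- S) ! i))"

definition Upsilon :: "(nat \<Rightarrow> real) \<Rightarrow> 'n set \<Rightarrow> real ^ 'n \<Rightarrow> real" where
  "Upsilon l S \<beta> = J_l l (restr \<beta> S) + Omega_c l S (restr \<beta> (- S))"

definition flip :: "'n set \<Rightarrow> real ^ 'n \<Rightarrow> real ^ 'n" where
  "flip J \<beta> = (\<chi> j. if j \<in> J then \<beta> $ j else - \<beta> $ j)"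

definition Bbar :: "(nat \<Rightarrow> real) \<Rightarrow> (real ^ 'n) set" where
  "Bbar l = (\<Union>S. {\<beta>. Upsilon l S \<beta> \<le> 1})"

definition Bg :: "(nat \<Rightarrow> real) \<Rightarrow> 'n set \<Rightarrow> (real ^ 'n) set" where
  "Bg l J = convex hull (Bbar l \<union> flip J ` Bbar l)"

definition gauge_g :: "(nat \<Rightarrow> real) \<Rightarrow> 'n set \<Rightarrow> real ^ 'n \<Rightarrow> real" where
  "gauge_g l J x = Inf {t. t > 0 \<and> x \<in> (\<lambda>y. t *\<^sub>R y) ` Bg l J}"

end

theory Submission
  imports Defs
begin

lemma ord_abs_props:
  fixes \<beta> :: "real ^ 'n::finite"
  shows "length (ord_abs \<beta> S) = card S"
    and "sum_list (ord_abs \<beta> S) = (\<Sum>j\<in>S. \<bar>\<beta> $ j\<bar>)"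
    and "set (ord_abs \<beta> S) = (\<lambda>j. \<bar>\<beta> $ j\<bar>) ` S"
proof -
  let ?M = "image_mset (\<lambda>j. \<bar>\<beta> $ j\<bar>) (mset_set S)"
  have m: "mset (ord_abs \<beta> S) = ?M" by (simp add: ord_abs_def)
  show "length (ord_abs \<beta> S) = card S"
    by (metis m size_mset size_image_mset size_mset_set)
  show "sum_list (ord_abs \<beta> S) = (\<Sum>j\<in>S. \<bar>\<beta> $ j\<bar>)"
    by (metis m sum_mset_sum_list sum_unfold_sum_mset)
  show "set (ord_abs \<beta> S) = (\<lambda>j. \<bar>\<beta> $ j\<bar>) ` S"
    by (metis m set_mset_mset set_image_mset finite finite_set_mset_mset_set)
qed

lemma weighted_ge:
  fixes xs :: "real list"
  assumes "\<And>i. i < length xs \<Longrightarrow> c \<le> w i" "\<And>x. x \<in> set xs \<Longrightarrow> 0 \<le> x"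
  shows "c * sum_list xs \<le> (\<Sum>i<length xs. w i * xs ! i)"
proof -
  have "c * sum_list xs = (\<Sum>i<length xs. c * xs ! i)"
    by (simp add: sum_list_sum_nth sum_distrib_left atLeast0LessThan)
  also have "\<dots> \<le> (\<Sum>i<length xs. w i * xs ! i)"
    by (intro sum_mono mult_right_mono) (auto simp: assms)
  finally show ?thesis .
qed

lemma upsilon_ge:
  fixes l :: "nat \<Rightarrow> real" and \<beta> :: "real ^ 'n::finite"
  assumes mono: "\<And>i j. 1 \<le> i \<Longrightarrow> i \<le> j \<Longrightarrow> j \<le> CARD('n) \<Longrightarrow> l j \<le> l i"
  shows "l CARD('n) * (\<Sum>j\<in>UNIV. \<bar>\<beta> $ j\<bar>) \<le> Upsilon l S \<beta>"
proof -
  let ?L = "l CARD('n)"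
  let ?xs = "ord_abs (restr \<beta> S) UNIV"
  let ?ys = "ord_abs (restr \<beta> (-S)) (-S)"
  have s1: "sum_list ?xs = (\<Sum>j\<in>S. \<bar>\<beta> $ j\<bar>)"
    by (simp add: ord_abs_props restr_def if_distrib sum.If_cases)
  have s2: "sum_list ?ys = (\<Sum>j\<in>-S. \<bar>\<beta> $ j\<bar>)"
    by (simp add: ord_abs_props restr_def)
  have a: "?L * sum_list ?xs \<le> J_l l (restr \<beta> S)"
  proof -
    have "?L * sum_list ?xs \<le> (\<Sum>i<length ?xs. l (Suc i) * ?xs ! i)"
    proof (rule weighted_ge)
      fix i assume "i < length ?xs"
      hence "Suc i \<le> CARD('n)" by (simp add: ord_abs_props)
      thus "?L \<le> l (Suc i)" by (intro mono) auto
    qed (auto simp: ord_abs_props)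
    thus ?thesis by (simp add: J_l_def ord_abs_props)
  qed
  have b: "?L * sum_list ?ys \<le> Omega_c l S (restr \<beta> (-S))"
  proof -
    have cc: "card S + card (-S) = CARD('n)"
      using card_Un_disjoint[of S "-S"] by (simp add: sup_compl_top)
    have "?L * sum_list ?ys \<le> (\<Sum>i<length ?ys. l (card S + Suc i) * ?ys ! i)"
    proof (rule weighted_ge)
      fix i assume "i < length ?ys"
      hence "card S + Suc i \<le> CARD('n)" using cc by (simp add: ord_abs_props)
      thus "?L \<le> l (card S + Suc i)" by (intro mono) auto
    qed (auto simp: ord_abs_props)
    thus ?thesis by (simp add: Omega_c_def ord_abs_props)
  qed
  have "(\<Sum>j\<in>UNIV. \<bar>\<beta> $ j\<bar>) = (\<Sum>j\<in>S. \<bar>\<beta> $ j\<bar>) + (\<Sum>j\<in>-S. \<bar>\<beta> $ j\<bar>)"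
    using sum.union_disjoint[of S "-S" "\<lambda>j. \<bar>\<beta> $ j\<bar>"] by (simp add: sup_compl_top)
  hence "?L * (\<Sum>j\<in>UNIV. \<bar>\<beta> $ j\<bar>) = ?L * sum_list ?xs + ?L * sum_list ?ys"
    by (simp add: s1 s2 distrib_left)
  with a b show ?thesis by (simp add: Upsilon_def)
qed

lemma axis_in_Bbar:
  fixes l :: "nat \<Rightarrow> real" and j :: "'n::finite"
  assumes "\<bar>c\<bar> * l CARD('n) \<le> 1"
  shows "(c *\<^sub>R axis j 1 :: real ^ 'n) \<in> Bbar l"
proof -
  let ?v = "(c *\<^sub>R axis j 1 :: real ^ 'n)"
  have r0: "restr ?v (-{j}) = 0"
    by (simp add: vec_eq_iff restr_def axis_def)
  have J0: "J_l l (restr ?v (-{j})) = 0"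
  proof -
    have "\<And>i. i < CARD('n) \<Longrightarrow> ord_abs (0::real^'n) UNIV ! i = 0"
    proof -
      fix i assume "i < CARD('n)"
      hence "ord_abs (0::real^'n) UNIV ! i \<in> set (ord_abs (0::real^'n) UNIV)"
        by (intro nth_mem) (simp add: ord_abs_props)
      thus "ord_abs (0::real^'n) UNIV ! i = 0" by (simp add: ord_abs_props)
    qed
    thus ?thesis by (simp add: J_l_def r0)
  qed
  have cj: "card (-{j}) = CARD('n) - 1"
  proof -
    have "-{j} = UNIV - {j}" by auto
    thus ?thesis by (simp add: card_Diff_singleton)
  qed
  have pos: "CARD('n) \<ge> 1" by (simp add: Suc_leI)
  let ?w = "restr ?v {j}"
  have len: "length (ord_abs ?w {j}) = 1" by (simp add: ord_abs_props)
  have "ord_abs ?w {j} ! 0 \<in> set (ord_abs ?w {j})" using len by (intro nth_mem) simp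
  hence e: "ord_abs ?w {j} ! 0 = \<bar>c\<bar>" by (simp add: ord_abs_props restr_def axis_def)
  have "Omega_c l (-{j}) ?w = l CARD('n) * \<bar>c\<bar>"
    using pos by (simp add: Omega_c_def e cj del: Compl_insert)
  hence "Upsilon l (-{j}) ?v \<le> 1" using assms J0 by (simp add: Upsilon_def mult.commute)
  thus ?thesis unfolding Bbar_def by blast
qed

lemma Bg_eq:
  fixes l :: "nat \<Rightarrow> real" and J :: "'n::finite set"
  assumes mono: "\<And>i j. 1 \<le> i \<Longrightarrow> i \<le> j \<Longrightarrow> j \<le> CARD('n) \<Longrightarrow> l j \<le> l i"
    and Lpos: "l CARD('n) > 0"
  shows "Bg l J = {x. l CARD('n) * (\<Sum>j\<in>UNIV. \<bar>x $ j\<bar>) \<le> 1}"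
proof
  let ?L = "l CARD('n)"
  let ?B = "{x::real^'n. ?L * (\<Sum>j\<in>UNIV. \<bar>x $ j\<bar>) \<le> 1}"
  have cvx: "convex ?B"
  proof (rule convexI)
    fix x y :: "real^'n" and u v :: real
    assume x: "x \<in> ?B" and y: "y \<in> ?B" and u: "0 \<le> u" and v: "0 \<le> v" and uv: "u + v = 1"
    have "(\<Sum>j\<in>UNIV. \<bar>(u *\<^sub>R x + v *\<^sub>R y) $ j\<bar>) \<le> (\<Sum>j\<in>UNIV. u * \<bar>x $ j\<bar> + v * \<bar>y $ j\<bar>)"
    proof (rule sum_mono)
      fix j
      have "\<bar>u * x $ j + v * y $ j\<bar> \<le> \<bar>u * x $ j\<bar> + \<bar>v * y $ j\<bar>" by (rule abs_triangle_ineq)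
      thus "\<bar>(u *\<^sub>R x + v *\<^sub>R y) $ j\<bar> \<le> u * \<bar>x $ j\<bar> + v * \<bar>y $ j\<bar>"
        using u v by (simp add: abs_mult)
    qed
    also have "\<dots> = u * (\<Sum>j\<in>UNIV. \<bar>x $ j\<bar>) + v * (\<Sum>j\<in>UNIV. \<bar>y $ j\<bar>)"
      by (simp add: sum.distrib sum_distrib_left)
    finally have nb: "(\<Sum>j\<in>UNIV. \<bar>(u *\<^sub>R x + v *\<^sub>R y) $ j\<bar>) \<le> u * (\<Sum>j\<in>UNIV. \<bar>x $ j\<bar>) + v * (\<Sum>j\<in>UNIV. \<bar>y $ j\<bar>)" .
    have "?L * (\<Sum>j\<in>UNIV. \<bar>(u *\<^sub>R x + v *\<^sub>R y) $ j\<bar>)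
        \<le> u * (?L * (\<Sum>j\<in>UNIV. \<bar>x $ j\<bar>)) + v * (?L * (\<Sum>j\<in>UNIV. \<bar>y $ j\<bar>))"
      using Lpos mult_left_mono[OF nb, of ?L] by (simp add: algebra_simps)
    also have "\<dots> \<le> u * 1 + v * 1"
      using x y u v by (intro add_mono mult_left_mono) auto
    finally show "u *\<^sub>R x + v *\<^sub>R y \<in> ?B" using uv by simp
  qed
  have sub: "Bbar l \<subseteq> ?B"
  proof
    fix x :: "real^'n" assume "x \<in> Bbar l"
    then obtain S where "Upsilon l S x \<le> 1" unfolding Bbar_def by blast
    with upsilon_ge[of l x S] mono show "x \<in> ?B" by simp
  qed
  have fl: "\<And>x. (\<Sum>j\<in>UNIV. \<bar>flip J x $ j\<bar>) = (\<Sum>j\<in>UNIV. \<bar>x $ j\<bar>)"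
    by (rule sum.cong) (auto simp: flip_def)
  have sub2: "flip J ` Bbar l \<subseteq> ?B" using sub fl by auto
  show "Bg l J \<subseteq> ?B" unfolding Bg_def
    by (rule hull_minimal) (use sub sub2 cvx in auto)
  show "?B \<subseteq> Bg l J"
  proof
    fix x :: "real^'n" assume x: "x \<in> ?B"
    let ?s = "\<Sum>j\<in>UNIV. \<bar>x $ j\<bar>"
    have hs: "Bbar l \<subseteq> Bg l J" unfolding Bg_def by (meson hull_subset le_sup_iff)
    show "x \<in> Bg l J"
    proof (cases "?s = 0")
      case True
      hence "x = 0" by (simp add: vec_eq_iff sum_nonneg_eq_0_iff)
      moreover have "(0 *\<^sub>R axis undefined 1 :: real^'n) \<in> Bbar l"
        by (rule axis_in_Bbar) simp
      ultimately show ?thesis using hs by auto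
    next
      case False
      have s0: "?s > 0" using False by (simp add: order_le_neq_trans sum_nonneg)
      have "(\<Sum>j\<in>UNIV. (\<bar>x $ j\<bar> / ?s) *\<^sub>R ((?s * sgn (x $ j)) *\<^sub>R axis j 1)) \<in> Bg l J"
      proof (rule convex_sum)
        show "convex (Bg l J)" unfolding Bg_def by (rule convex_convex_hull)
        show "(\<Sum>j\<in>UNIV. \<bar>x $ j\<bar> / ?s) = 1" using False by (simp add: sum_divide_distrib[symmetric])
        fix j
        show "0 \<le> \<bar>x $ j\<bar> / ?s" using s0 by simp
        have "\<bar>?s * sgn (x $ j)\<bar> * ?L \<le> ?s * ?L"
          using s0 Lpos by (intro mult_right_mono) (auto simp: abs_mult abs_sgn_eq)
        also have "\<dots> \<le> 1" using x by (simp add: mult.commute)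
        finally have "((?s * sgn (x $ j)) *\<^sub>R axis j 1 :: real^'n) \<in> Bbar l"
          by (rule axis_in_Bbar)
        thus "((?s * sgn (x $ j)) *\<^sub>R axis j 1 :: real^'n) \<in> Bg l J" using hs by auto
      qed (simp)
      moreover have "(\<Sum>j\<in>UNIV. (\<bar>x $ j\<bar> / ?s) *\<^sub>R ((?s * sgn (x $ j)) *\<^sub>R axis j 1)) = x"
      proof -
        have "\<And>j. (\<bar>x $ j\<bar> / ?s) * (?s * sgn (x $ j)) = x $ j"
          using s0 by (simp add: field_simps abs_mult_sgn)
        moreover have "\<And>i. (\<Sum>k\<in>UNIV. x $ k * (if i = k then 1 else 0)) = x $ i"
          by (simp add: if_distrib[of "\<lambda>t. x $ _ * t"] cong: if_cong)
        ultimately show ?thesis by (simp add: vec_eq_iff axis_def mult.assoc[symmetric] cong: if_cong)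
      qed
      ultimately show ?thesis by simp
    qed
  qed
qed

theorem lemma4:
  fixes l :: "nat \<Rightarrow> real" and J :: "'n::finite set" and \<beta> :: "real ^ 'n"
  assumes "l 1 \<le> 1"
    and "\<And>i j. 1 \<le> i \<Longrightarrow> i \<le> j \<Longrightarrow> j \<le> CARD('n) \<Longrightarrow> l j \<le> l i"
    and "l CARD('n) > 0"
  shows "gauge_g l J \<beta> = l CARD('n) * (\<Sum>j\<in>UNIV. \<bar>\<beta> $ j\<bar>)"
proof -
  let ?L = "l CARD('n)"
  let ?c = "?L * (\<Sum>j\<in>UNIV. \<bar>\<beta> $ j\<bar>)"
  have BG: "Bg l J = {x. ?L * (\<Sum>j\<in>UNIV. \<bar>x $ j\<bar>) \<le> 1}"
    using Bg_eq[of l J] assms(2,3) by blast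
  have c0: "0 \<le> ?c" using assms(3) by (simp add: sum_nonneg)
  have key: "\<And>t. t > 0 \<Longrightarrow> \<beta> \<in> (\<lambda>y. t *\<^sub>R y) ` Bg l J \<longleftrightarrow> ?c \<le> t"
  proof -
    fix t :: real assume t: "t > 0"
    have N: "\<And>y::real^'n. (\<Sum>j\<in>UNIV. \<bar>(t *\<^sub>R y) $ j\<bar>) = t * (\<Sum>j\<in>UNIV. \<bar>y $ j\<bar>)"
      using t by (simp add: abs_mult sum_distrib_left)
    show "\<beta> \<in> (\<lambda>y. t *\<^sub>R y) ` Bg l J \<longleftrightarrow> ?c \<le> t"
    proof
      assume "\<beta> \<in> (\<lambda>y. t *\<^sub>R y) ` Bg l J"
      then obtain y where y: "y \<in> Bg l J" "\<beta> = t *\<^sub>R y" by blast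
      have "?c = t * (?L * (\<Sum>j\<in>UNIV. \<bar>y $ j\<bar>))" using y N by (simp add: algebra_simps)
      also have "\<dots> \<le> t * 1" using y BG t by (intro mult_left_mono) auto
      finally show "?c \<le> t" by simp
    next
      assume ct: "?c \<le> t"
      let ?y = "(1 / t) *\<^sub>R \<beta>"
      have "?L * (\<Sum>j\<in>UNIV. \<bar>?y $ j\<bar>) = ?c / t"
        using t by (simp add: abs_mult sum_divide_distrib[symmetric])
      also have "\<dots> \<le> 1" using ct t by simp
      finally have "?y \<in> Bg l J" using BG by simp
      moreover have "\<beta> = t *\<^sub>R ?y" using t by simp
      ultimately show "\<beta> \<in> (\<lambda>y. t *\<^sub>R y) ` Bg l J" by blast
    qed
  qed
  have S: "{t. t > 0 \<and> \<beta> \<in> (\<lambda>y. t *\<^sub>R y) ` Bg l J} = {t. t > 0 \<and> ?c \<le> t}"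
    using key by blast
  show ?thesis
  proof (cases "?c = 0")
    case True
    hence "{t. t > 0 \<and> ?c \<le> t} = {0<..}" by auto
    hence "gauge_g l J \<beta> = Inf {0::real<..}" unfolding gauge_g_def S by simp
    thus ?thesis using True by simp
  next
    case False
    hence cp: "?c > 0" using c0 by linarith
    have "{t. t > 0 \<and> ?c \<le> t} = {?c..}"
    proof (intro set_eqI iffI)
      fix t assume "t \<in> {?c..}" thus "t \<in> {t. t > 0 \<and> ?c \<le> t}" using cp by simp
    qed simp
    thus ?thesis unfolding gauge_g_def S by simp
  qed
qed

end
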